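(* For all integers $k\ge4$ and $n\ge1$, $$\chi''_c(G_{k,n})\le k+1+\frac{1}{2n}.$$
   Context: A half-edge has exactly one end vertex. Let $H_k$ be obtained from $K_{k,k}$ by deleting one vertex but keeping its $k$ incident edges as half-edges, and let $H'_k$ be obtained from $H_k$ by deleting $k-2$ of its half-edges. Let $B_1,\ldots,B_n$ be copies of $H'_k$ with half-edges $f_i,f'_i$ in $B_i$, and let $B_0$ be a single vertex $u$ with two half-edges $f_0,f'_{n+1}$. $G_{k,n}$ is obtained from the disjoint union of $B_0,\ldots,B_n$ by joining $f_i$ and $f'_{i+1}$ into an edge for each $0\le i\le n$. For integers $p\ge q\ge1$, a $(p,q)$-total colouring of a graph assigns colours in $\{0,\ldots,p-1\}$ to vertices and edges such that $q\le|c(a)-c(b)|\le p-q$ whenever $a,b$ are adjacent vertices, edges sharing an end, or an incident vertex–edge pair; $\chi''_c(G)=\inf\{p/q\mid G \text{ has a } (p,q)\text{-total colouring}\}$. *)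

theory Defs
  imports Complex_Main
begin

text \<open>Simple graphs are given by a vertex set V and an edge set E of 2-element subsets of V.\<close>

definition col_ok :: "nat \<Rightarrow> nat \<Rightarrow> nat \<Rightarrow> nat \<Rightarrow> bool" where
  "col_ok p q a b \<longleftrightarrow>
     int q \<le> \<bar>int a - int b\<bar> \<and> \<bar>int a - int b\<bar> \<le> int p - int q"

definition pq_total_colouring ::
  "'v set \<Rightarrow> 'v set set \<Rightarrow> nat \<Rightarrow> nat \<Rightarrow> ('v \<Rightarrow> nat) \<Rightarrow> ('v set \<Rightarrow> nat) \<Rightarrow> bool" where
  "pq_total_colouring V E p q cv ce \<longleftrightarrow>
     (\<forall>v\<in>V. cv v < p) \<and> (\<forall>e\<in>E. ce e < p) \<and>
     (\<forall>u\<in>V. \<forall>v\<in>V. {u, v} \<in> E \<longrightarrow> col_ok p q (cv u) (cv v)) \<and>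
     (\<forall>e\<in>E. \<forall>e'\<in>E. e \<noteq> e' \<and> e \<inter> e' \<noteq> {} \<longrightarrow> col_ok p q (ce e) (ce e')) \<and>
     (\<forall>v\<in>V. \<forall>e\<in>E. v \<in> e \<longrightarrow> col_ok p q (cv v) (ce e))"

definition circ_total_chromatic :: "'v set \<Rightarrow> 'v set set \<Rightarrow> real" where
  "circ_total_chromatic V E =
     Inf {real p / real q | p q. 1 \<le> q \<and> q \<le> p \<and>
            (\<exists>cv ce. pq_total_colouring V E p q cv ce)}"

text \<open>Vertices of G_{k,n}: the vertex u of B_0; in block B_i (1 \<le> i \<le> n) the side
  A i j (j < k) of K_{k,k} that keeps all its vertices, and the side Bv i j (j < k-1)
  from which one vertex was deleted. The two surviving half-edges of B_i are at
  A i 0 (half-edge f'_i) and A i 1 (half-edge f_i).\<close>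
datatype gvert = U | A nat nat | Bv nat nat

definition G_V :: "nat \<Rightarrow> nat \<Rightarrow> gvert set" where
  "G_V k n = {U} \<union> {A i j | i j. 1 \<le> i \<and> i \<le> n \<and> j < k}
                 \<union> {Bv i j | i j. 1 \<le> i \<and> i \<le> n \<and> j < k - 1}"

definition G_E :: "nat \<Rightarrow> nat \<Rightarrow> gvert set set" where
  "G_E k n =
     {{A i j, Bv i l} | i j l. 1 \<le> i \<and> i \<le> n \<and> j < k \<and> l < k - 1}
     \<union> {{U, A 1 0}}
     \<union> {{A i 1, A (Suc i) 0} | i. 1 \<le> i \<and> i < n}
     \<union> {{A n 1, U}}"

end

theory Submission imports Defs begin

lemma aux1:
  fixes c1 c2 s1 s2 k q :: nat
  assumes "c2 < c1" "c1 \<le> k" "s1 \<le> q" "s2 \<le> q"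
    "c1 = Suc c2 \<Longrightarrow> s2 \<le> s1" "c1 = c2 + k \<Longrightarrow> s1 \<le> s2 + 1"
  shows "int q \<le> int (c1*q+s1) - int (c2*q+s2) \<and> int (c1*q+s1) - int (c2*q+s2) \<le> int ((k+1)*q+1) - int q"
proof -
  obtain d where d: "c1 = c2 + d" "d \<ge> 1" using assms(1) by (intro that[of "c1 - c2"]) auto
  have e: "int (c1*q+s1) - int (c2*q+s2) = int d * int q + int s1 - int s2"
    using d by (simp add: algebra_simps)
  have dk: "d \<le> k" using d assms by simp
  have lo: "int q \<le> int d * int q + int s1 - int s2"
  proof (cases "d = 1")
    case True then show ?thesis using assms d by simp
  next
    case False then have "d \<ge> 2" using d by simp
    then have "int d * int q \<ge> 2 * int q" by (simp add: mult_right_mono)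
    then show ?thesis using assms by simp
  qed
  have hi: "int d * int q + int s1 - int s2 \<le> int k * int q + 1"
  proof (cases "d = k")
    case True then show ?thesis using assms d by simp
  next
    case False then have "d + 1 \<le> k" using dk by simp
    then have "int d * int q + int q \<le> int k * int q"
      by (metis of_nat_add of_nat_le_iff of_nat_mult distrib_right mult_1 mult_le_mono1)
    then show ?thesis using assms by simp
  qed
  show ?thesis using e lo hi by (simp add: algebra_simps)
qed

lemma col_ok_sym: "col_ok p q a b = col_ok p q b a"
  unfolding col_ok_def by (simp add: abs_minus_commute)

definition good :: "nat \<Rightarrow> nat \<Rightarrow> nat \<Rightarrow> nat \<Rightarrow> nat \<Rightarrow> nat \<Rightarrow> bool" where
  "good k q c1 s1 c2 s2 \<longleftrightarrow> c1 \<le> k \<and> c2 \<le> k \<and> s1 \<le> q \<and> s2 \<le> q \<and>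
     (c1 = c2 \<longrightarrow> (s1 = 0 \<and> s2 = q \<or> s1 = q \<and> s2 = 0)) \<and>
     (c1 = Suc c2 \<longrightarrow> s2 \<le> s1) \<and> (c2 = Suc c1 \<longrightarrow> s1 \<le> s2) \<and>
     (c1 = c2 + k \<longrightarrow> s1 \<le> s2 + 1) \<and> (c2 = c1 + k \<longrightarrow> s2 \<le> s1 + 1)"

lemma good_col:
  assumes "good k q c1 s1 c2 s2" "1 \<le> k"
  shows "col_ok ((k+1)*q+1) q (c1*q+s1) (c2*q+s2)"
proof -
  consider "c2 < c1" | "c1 < c2" | "c1 = c2" by linarith
  then show ?thesis
  proof cases
    case 1
    then have "int q \<le> int (c1*q+s1) - int (c2*q+s2) \<and> int (c1*q+s1) - int (c2*q+s2) \<le> int ((k+1)*q+1) - int q"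
      using assms unfolding good_def by (intro aux1) auto
    then show ?thesis unfolding col_ok_def by auto
  next
    case 2
    then have "int q \<le> int (c2*q+s2) - int (c1*q+s1) \<and> int (c2*q+s2) - int (c1*q+s1) \<le> int ((k+1)*q+1) - int q"
      using assms unfolding good_def by (intro aux1) auto
    then show ?thesis unfolding col_ok_def by auto
  next
    case 3
    have "int q \<le> int k * int q" using assms(2)
      by (metis mult_1 mult_le_mono1 of_nat_le_iff of_nat_mult)
    then show ?thesis using 3 assms unfolding good_def col_ok_def by auto
  qed
qed

fun vc :: "nat \<Rightarrow> gvert \<Rightarrow> nat" where
  "vc k U = 2"
| "vc k (A i j) = (if j = 0 then k - 1 else if j = 1 then 0 else j - 1)"
| "vc k (Bv i l) = k"

fun vo :: "gvert \<Rightarrow> nat" where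
  "vo U = 0"
| "vo (A i j) = 2*(i-1) + (if j = 1 then 1 else 0)"
| "vo (Bv i l) = 2*(i-1) + 1"

definition ebc :: "nat \<Rightarrow> nat \<Rightarrow> nat \<Rightarrow> nat" where
  "ebc k j l = (if j + l < k then j + l else j + l - k)"
definition ebo :: "nat \<Rightarrow> nat \<Rightarrow> nat \<Rightarrow> nat \<Rightarrow> nat" where
  "ebo k i j l = 2*(i-1) + (if 1 \<le> j \<and> j + l < k then 1 else 0)"

definition ecl :: "nat \<Rightarrow> gvert set \<Rightarrow> nat" where
  "ecl k e = (if \<exists>i l. Bv i l \<in> e then ebc k (SOME j. \<exists>i. A i j \<in> e) (SOME l. \<exists>i. Bv i l \<in> e) else k)"
definition eof :: "nat \<Rightarrow> gvert set \<Rightarrow> nat" where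
  "eof k e = (if \<exists>i l. Bv i l \<in> e then ebo k (SOME i. \<exists>l. Bv i l \<in> e) (SOME j. \<exists>i. A i j \<in> e) (SOME l. \<exists>i. Bv i l \<in> e)
     else 2*(if \<exists>i. A i 1 \<in> e then (SOME i. A i 1 \<in> e) else 0))"

definition Lv :: "nat \<Rightarrow> gvert" where "Lv i = (if i = 0 then U else A i 1)"
definition Rv :: "nat \<Rightarrow> nat \<Rightarrow> gvert" where "Rv n i = (if i = n then U else A (Suc i) 0)"

lemma LR_neq: "Lv i \<noteq> Bv a b" "Rv n i \<noteq> Bv a b"
  unfolding Lv_def Rv_def by auto

lemma ecl_B: "ecl k {A i j, Bv i l} = ebc k j l"
proof -
  have 1: "(SOME j'. \<exists>i'. A i' j' \<in> {A i j, Bv i l}) = j" by (rule some_equality) auto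
  have 2: "(SOME l'. \<exists>i'. Bv i' l' \<in> {A i j, Bv i l}) = l" by (rule some_equality) auto
  show ?thesis unfolding ecl_def 1 2 by auto
qed

lemma eof_B: "eof k {A i j, Bv i l} = ebo k i j l"
proof -
  have 1: "(SOME j'. \<exists>i'. A i' j' \<in> {A i j, Bv i l}) = j" by (rule some_equality) auto
  have 2: "(SOME l'. \<exists>i'. Bv i' l' \<in> {A i j, Bv i l}) = l" by (rule some_equality) auto
  have 3: "(SOME i'. \<exists>l'. Bv i' l' \<in> {A i j, Bv i l}) = i" by (rule some_equality) auto
  show ?thesis unfolding eof_def 1 2 3 by auto
qed

lemma ecl_J: "ecl k {Lv i, Rv n i} = k"
  unfolding ecl_def Lv_def Rv_def by auto

lemma eof_J: "eof k {Lv i, Rv n i} = 2*i"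
proof (cases "i = 0")
  case True then show ?thesis unfolding eof_def Lv_def Rv_def by auto
next
  case False
  have "(SOME i'. A i' 1 \<in> {Lv i, Rv n i}) = i"
    by (rule some_equality) (use False in \<open>auto simp: Lv_def Rv_def split: if_splits\<close>)
  then show ?thesis using False unfolding eof_def by (auto simp: Lv_def Rv_def)
qed

lemma GE_alt: "G_E k n = {{A i j, Bv i l} | i j l. 1 \<le> i \<and> i \<le> n \<and> j < k \<and> l < k - 1}
   \<union> {{Lv i, Rv n i} | i. i \<le> n}" if "n \<ge> 1"
proof -
  have "{{Lv i, Rv n i} | i. i \<le> n} = {{U, A 1 0}} \<union> {{A i 1, A (Suc i) 0} | i. 1 \<le> i \<and> i < n} \<union> {{A n 1, U}}"
  proof (intro equalityI subsetI)
    fix e assume "e \<in> {{Lv i, Rv n i} | i. i \<le> n}"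
    then obtain i where "i \<le> n" "e = {Lv i, Rv n i}" by auto
    then show "e \<in> {{U, A 1 0}} \<union> {{A i 1, A (Suc i) 0} | i. 1 \<le> i \<and> i < n} \<union> {{A n 1, U}}"
      using that by (cases "i = 0"; cases "i = n") (auto simp: Lv_def Rv_def)
  next
    fix e assume "e \<in> {{U, A 1 0}} \<union> {{A i 1, A (Suc i) 0} | i. 1 \<le> i \<and> i < n} \<union> {{A n 1, U}}"
    have h0: "{Lv 0, Rv n 0} = {U, A 1 0}" using that by (simp add: Lv_def Rv_def)
    have hn: "{Lv n, Rv n n} = {A n 1, U}" using that by (simp add: Lv_def Rv_def)
    have hi: "{Lv i, Rv n i} = {A i 1, A (Suc i) 0}" if "1 \<le> i" "i < n" for i
      using that by (simp add: Lv_def Rv_def)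
    from \<open>e \<in> _\<close> consider "e = {Lv 0, Rv n 0}" | i where "1 \<le> i" "i < n" "e = {Lv i, Rv n i}" | "e = {Lv n, Rv n n}"
      unfolding h0 hn using hi by blast
    then show "e \<in> {{Lv i, Rv n i} | i. i \<le> n}"
    proof cases
      case 1 then show ?thesis by blast
    next
      case (2 i) then show ?thesis by (metis (mono_tags, lifting) mem_Collect_eq less_imp_le_nat)
    next
      case 3 then show ?thesis by blast
    qed
  qed
  then show ?thesis unfolding G_E_def by auto
qed

lemma good_sym: "good k q c1 s1 c2 s2 = good k q c2 s2 c1 s1"
  unfolding good_def by auto

lemma vv_B: assumes "4 \<le> k" "1 \<le> i" "i \<le> n" "j < k" "l < k - 1"
  shows "good k (2*n) (vc k (A i j)) (vo (A i j)) (vc k (Bv i l)) (vo (Bv i l))"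
  using assms unfolding good_def by auto

lemma vv_J: assumes "4 \<le> k" "1 \<le> n" "i \<le> n"
  shows "good k (2*n) (vc k (Lv i)) (vo (Lv i)) (vc k (Rv n i)) (vo (Rv n i))"
  using assms unfolding good_def Lv_def Rv_def by auto

lemma ee_BB1: assumes "4 \<le> k" "1 \<le> i" "i \<le> n" "j < k" "l < k - 1" "l' < k - 1" "l \<noteq> l'"
  shows "good k (2*n) (ebc k j l) (ebo k i j l) (ebc k j l') (ebo k i j l')"
  using assms unfolding good_def ebc_def ebo_def by auto

lemma ee_BB2: assumes "4 \<le> k" "1 \<le> i" "i \<le> n" "j < k" "j' < k" "l < k - 1" "j \<noteq> j'"
  shows "good k (2*n) (ebc k j l) (ebo k i j l) (ebc k j' l) (ebo k i j' l)"
  using assms unfolding good_def ebc_def ebo_def by auto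

lemma ee_BJ: assumes "4 \<le> k" "1 \<le> i" "i \<le> n" "j < k" "l < k - 1" "i' \<le> n"
   "A i j = Lv i' \<or> A i j = Rv n i'"
  shows "good k (2*n) (ebc k j l) (ebo k i j l) k (2*i')"
  using assms unfolding good_def ebc_def ebo_def Lv_def Rv_def by (auto split: if_splits)

lemma ee_JJ: assumes "4 \<le> k" "1 \<le> n" "i \<le> n" "i' \<le> n" "i \<noteq> i'" "{Lv i, Rv n i} \<inter> {Lv i', Rv n i'} \<noteq> {}"
  shows "good k (2*n) k (2*i) k (2*i')"
  using assms unfolding good_def Lv_def Rv_def by (auto split: if_splits)

lemma ve_B: assumes "4 \<le> k" "1 \<le> i" "i \<le> n" "j < k" "l < k - 1"
  shows "good k (2*n) (vc k (A i j)) (vo (A i j)) (ebc k j l) (ebo k i j l)"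
    and "good k (2*n) (vc k (Bv i l)) (vo (Bv i l)) (ebc k j l) (ebo k i j l)"
  using assms unfolding good_def ebc_def ebo_def by auto

lemma ve_J: assumes "4 \<le> k" "1 \<le> n" "i \<le> n"
  shows "good k (2*n) (vc k (Lv i)) (vo (Lv i)) k (2*i)"
    and "good k (2*n) (vc k (Rv n i)) (vo (Rv n i)) k (2*i)"
  using assms unfolding good_def Lv_def Rv_def by auto

lemma bound: "(c::nat) \<le> k \<Longrightarrow> s \<le> q \<Longrightarrow> c*q + s < (k+1)*q + 1"
proof -
  assume "c \<le> k" "s \<le> q"
  from \<open>c \<le> k\<close> have "c*q \<le> k*q" by (rule mult_le_mono1)
  then show ?thesis using \<open>s \<le> q\<close> by (simp only: add_mult_distrib mult_1)
qed

lemma EV: assumes "n \<ge> 1" "e \<in> G_E k n"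
  shows "(\<exists>i j l. e = {A i j, Bv i l} \<and> 1 \<le> i \<and> i \<le> n \<and> j < k \<and> l < k - 1) \<or> (\<exists>i. e = {Lv i, Rv n i} \<and> i \<le> n)"
  using assms GE_alt[OF assms(1), of k] by auto

lemma colouring:
  assumes k: "4 \<le> k" and n: "1 \<le> n"
  shows "pq_total_colouring (G_V k n) (G_E k n) ((k+1)*(2*n)+1) (2*n) (\<lambda>v. vc k v*(2*n) + vo v) (\<lambda>e. ecl k e * (2*n) + eof k e)"
proof -
  let ?q = "2*n"
  have gc: "col_ok ((k+1)*?q+1) ?q (c1*?q+s1) (c2*?q+s2)" if "good k ?q c1 s1 c2 s2" for c1 s1 c2 s2
    using good_col[OF that] k by simp
  have vb: "vc k v \<le> k \<and> vo v \<le> ?q" if "v \<in> G_V k n" for v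
    using that k unfolding G_V_def by auto
  have eb: "ecl k e \<le> k \<and> eof k e \<le> ?q" if "e \<in> G_E k n" for e
    using EV[OF n that] 
  proof
    assume "\<exists>i j l. e = {A i j, Bv i l} \<and> 1 \<le> i \<and> i \<le> n \<and> j < k \<and> l < k - 1"
    then obtain i j l where "e = {A i j, Bv i l}" "1 \<le> i" "i \<le> n" "j < k" "l < k - 1" by blast
    then show ?thesis by (simp add: ecl_B eof_B ebc_def ebo_def) arith
  next
    assume "\<exists>i. e = {Lv i, Rv n i} \<and> i \<le> n"
    then obtain i where "e = {Lv i, Rv n i}" "i \<le> n" by blast
    then show ?thesis by (simp add: ecl_J eof_J)
  qed
  have VV: "good k ?q (vc k u) (vo u) (vc k v) (vo v)" if "u \<in> G_V k n" "v \<in> G_V k n" "{u, v} \<in> G_E k n" for u v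
    using EV[OF n that(3)]
  proof
    assume "\<exists>i j l. {u,v} = {A i j, Bv i l} \<and> 1 \<le> i \<and> i \<le> n \<and> j < k \<and> l < k - 1"
    then obtain i j l where h: "{u,v} = {A i j, Bv i l}" "1 \<le> i" "i \<le> n" "j < k" "l < k - 1" by blast
    from h(1) have "u = A i j \<and> v = Bv i l \<or> u = Bv i l \<and> v = A i j" by (simp add: doubleton_eq_iff)
    moreover have g: "good k ?q (vc k (A i j)) (vo (A i j)) (vc k (Bv i l)) (vo (Bv i l))" by (rule vv_B[OF k h(2-5)])
    moreover have "good k ?q (vc k (Bv i l)) (vo (Bv i l)) (vc k (A i j)) (vo (A i j))" by (subst good_sym) (rule g)
    ultimately show ?thesis by blast
  next
    assume "\<exists>i. {u,v} = {Lv i, Rv n i} \<and> i \<le> n"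
    then obtain i where h: "{u,v} = {Lv i, Rv n i}" "i \<le> n" by blast
    from h(1) have "u = Lv i \<and> v = Rv n i \<or> u = Rv n i \<and> v = Lv i" by (simp add: doubleton_eq_iff)
    moreover have g: "good k ?q (vc k (Lv i)) (vo (Lv i)) (vc k (Rv n i)) (vo (Rv n i))" by (rule vv_J[OF k n h(2)])
    moreover have "good k ?q (vc k (Rv n i)) (vo (Rv n i)) (vc k (Lv i)) (vo (Lv i))" by (subst good_sym) (rule g)
    ultimately show ?thesis by blast
  qed
  have VE: "good k ?q (vc k v) (vo v) (ecl k e) (eof k e)" if "v \<in> e" "e \<in> G_E k n" for v e
    using EV[OF n that(2)]
  proof
    assume "\<exists>i j l. e = {A i j, Bv i l} \<and> 1 \<le> i \<and> i \<le> n \<and> j < k \<and> l < k - 1"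
    then obtain i j l where h: "e = {A i j, Bv i l}" "1 \<le> i" "i \<le> n" "j < k" "l < k - 1" by blast
    have "v = A i j \<or> v = Bv i l" using that(1) h(1) by simp
    then show ?thesis using ve_B[OF k h(2-5)] unfolding h(1) ecl_B eof_B by blast
  next
    assume "\<exists>i. e = {Lv i, Rv n i} \<and> i \<le> n"
    then obtain i where h: "e = {Lv i, Rv n i}" "i \<le> n" by blast
    have "v = Lv i \<or> v = Rv n i" using that(1) h(1) by simp
    then show ?thesis using ve_J[OF k n h(2)] unfolding h(1) ecl_J eof_J by blast
  qed
  have EE: "good k ?q (ecl k e) (eof k e) (ecl k e') (eof k e')"
    if "e \<in> G_E k n" "e' \<in> G_E k n" "e \<noteq> e'" "e \<inter> e' \<noteq> {}" for e e'
    using EV[OF n that(1)]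
  proof
    assume "\<exists>i j l. e = {A i j, Bv i l} \<and> 1 \<le> i \<and> i \<le> n \<and> j < k \<and> l < k - 1"
    then obtain i j l where h: "e = {A i j, Bv i l}" "1 \<le> i" "i \<le> n" "j < k" "l < k - 1" by blast
    show ?thesis using EV[OF n that(2)]
    proof
      assume "\<exists>i j l. e' = {A i j, Bv i l} \<and> 1 \<le> i \<and> i \<le> n \<and> j < k \<and> l < k - 1"
      then obtain i' j' l' where h': "e' = {A i' j', Bv i' l'}" "1 \<le> i'" "i' \<le> n" "j' < k" "l' < k - 1" by blast
      from that(4) obtain x where x: "x \<in> e" "x \<in> e'" by blast
      have "(i' = i \<and> j' = j \<and> l \<noteq> l') \<or> (i' = i \<and> l' = l \<and> j \<noteq> j')"
      proof -
        from x(1) h(1) have "x = A i j \<or> x = Bv i l" by simp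
        then show ?thesis
        proof
          assume "x = A i j"
          with x(2) h'(1) have "i' = i" "j' = j" by auto
          with that(3) h(1) h'(1) show ?thesis by auto
        next
          assume "x = Bv i l"
          with x(2) h'(1) have "i' = i" "l' = l" by auto
          with that(3) h(1) h'(1) show ?thesis by auto
        qed
      qed
      then show ?thesis
      proof
        assume "i' = i \<and> j' = j \<and> l \<noteq> l'"
        then have "i' = i" "j' = j" "l \<noteq> l'" by auto
        then show ?thesis using ee_BB1[OF k h(2-5) h'(5)] unfolding h(1) h'(1) ecl_B eof_B by simp
      next
        assume "i' = i \<and> l' = l \<and> j \<noteq> j'"
        then have "i' = i" "l' = l" "j \<noteq> j'" by auto
        then show ?thesis using ee_BB2[OF k h(2-4) h'(4) h(5)] unfolding h(1) h'(1) ecl_B eof_B by simp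
      qed
    next
      assume "\<exists>i. e' = {Lv i, Rv n i} \<and> i \<le> n"
      then obtain i' where h': "e' = {Lv i', Rv n i'}" "i' \<le> n" by blast
      from that(4) obtain x where x: "x \<in> e" "x \<in> e'" by blast
      have "x = Lv i' \<or> x = Rv n i'" using x(2) h'(1) by simp
      then have "x \<noteq> Bv i l" using LR_neq by metis
      then have "x = A i j" using x(1) h(1) by simp
      then have "A i j = Lv i' \<or> A i j = Rv n i'" using x(2) h'(1) by simp
      then have "good k ?q (ebc k j l) (ebo k i j l) k (2*i')" by (rule ee_BJ[OF k h(2-5) h'(2)])
      then show ?thesis unfolding h(1) h'(1) ecl_B eof_B ecl_J eof_J .
    qed
  next
    assume "\<exists>i. e = {Lv i, Rv n i} \<and> i \<le> n"
    then obtain i where h: "e = {Lv i, Rv n i}" "i \<le> n" by blast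
    show ?thesis using EV[OF n that(2)]
    proof
      assume "\<exists>i j l. e' = {A i j, Bv i l} \<and> 1 \<le> i \<and> i \<le> n \<and> j < k \<and> l < k - 1"
      then obtain i' j' l' where h': "e' = {A i' j', Bv i' l'}" "1 \<le> i'" "i' \<le> n" "j' < k" "l' < k - 1" by blast
      from that(4) obtain x where x: "x \<in> e" "x \<in> e'" by blast
      have "x = Lv i \<or> x = Rv n i" using x(1) h(1) by simp
      then have "x \<noteq> Bv i' l'" using LR_neq by metis
      then have "x = A i' j'" using x(2) h'(1) by simp
      then have "A i' j' = Lv i \<or> A i' j' = Rv n i" using x(1) h(1) by simp
      then have g: "good k ?q (ebc k j' l') (ebo k i' j' l') k (2*i)" by (rule ee_BJ[OF k h'(2-5) h(2)])
      have "good k ?q k (2*i) (ebc k j' l') (ebo k i' j' l')" by (subst good_sym) (rule g)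
      then show ?thesis unfolding h(1) h'(1) ecl_B eof_B ecl_J eof_J .
    next
      assume "\<exists>i. e' = {Lv i, Rv n i} \<and> i \<le> n"
      then obtain i' where h': "e' = {Lv i', Rv n i'}" "i' \<le> n" by blast
      have "i \<noteq> i'" using that(3) h(1) h'(1) by blast
      moreover have "{Lv i, Rv n i} \<inter> {Lv i', Rv n i'} \<noteq> {}" using that(4) unfolding h(1) h'(1) .
      ultimately have "good k ?q k (2*i) k (2*i')" by (rule ee_JJ[OF k n h(2) h'(2)])
      then show ?thesis unfolding h(1) h'(1) ecl_J eof_J .
    qed
  qed
  show ?thesis unfolding pq_total_colouring_def
  proof (intro conjI ballI impI)
    fix v assume "v \<in> G_V k n" then show "vc k v * ?q + vo v < (k+1)*?q+1" using vb by (intro bound) auto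
  next
    fix e assume "e \<in> G_E k n" then show "ecl k e * ?q + eof k e < (k+1)*?q+1" using eb by (intro bound) auto
  next
    fix u v assume "u \<in> G_V k n" "v \<in> G_V k n" "{u,v} \<in> G_E k n"
    then show "col_ok ((k+1)*?q+1) ?q (vc k u * ?q + vo u) (vc k v * ?q + vo v)" by (intro gc VV)
  next
    fix e e' assume "e \<in> G_E k n" "e' \<in> G_E k n" "e \<noteq> e' \<and> e \<inter> e' \<noteq> {}"
    then show "col_ok ((k+1)*?q+1) ?q (ecl k e * ?q + eof k e) (ecl k e' * ?q + eof k e')" by (intro gc EE) auto
  next
    fix v e assume "v \<in> G_V k n" "e \<in> G_E k n" "v \<in> e"
    then show "col_ok ((k+1)*?q+1) ?q (vc k v * ?q + vo v) (ecl k e * ?q + eof k e)" by (intro gc VE)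
  qed
qed


theorem theorem8:
  fixes k n :: nat
  assumes "k \<ge> 4" and "n \<ge> 1"
  shows "circ_total_chromatic (G_V k n) (G_E k n) \<le> real k + 1 + 1 / (2 * real n)"
proof -
  let ?S = "{real p / real q | p q. 1 \<le> q \<and> q \<le> p \<and>
            (\<exists>cv ce. pq_total_colouring (G_V k n) (G_E k n) p q cv ce)}"
  let ?p = "(k+1)*(2*n)+1" and ?q = "2*n"
  have "real ?p / real ?q \<in> ?S"
  proof -
    have "1 \<le> ?q" using assms by simp
    moreover have "?q \<le> ?p" by simp
    moreover have "\<exists>cv ce. pq_total_colouring (G_V k n) (G_E k n) ?p ?q cv ce"
      using colouring[OF assms] by blast
    ultimately show ?thesis by blast
  qed
  moreover have "bdd_below ?S" by (rule bdd_belowI[of _ 0]) auto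
  ultimately have "Inf ?S \<le> real ?p / real ?q" by (rule cInf_lower)
  moreover have "real ?p / real ?q = real k + 1 + 1 / (2 * real n)"
    using assms by (simp add: field_simps)
  ultimately show ?thesis unfolding circ_total_chromatic_def by simp
qed

end
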